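(* For every $t=0,1,\dots,T-1$, $H_t(s_t-\theta)\ge H_t(S_t)+K_t$.
   Context: Model. Fix an integer horizon $T\ge 2$, a discount factor $\alpha\in(0,1]$, and for $t=0,\dots,T-1$: unit ordering costs $c_t\in\mathbb R$, a salvage coefficient $c_T\in\mathbb R$, setup costs $K_t\ge 0$, functions $G_t:\mathbb R\to\mathbb R$, and independent nonnegative random demands $D_0,\dots,D_{T-1}$ with right-continuous distribution functions $F_t$ and finite means; all expectations appearing are assumed finite. Put $C_t(y)=(c_t-\alpha c_{t+1})y+G_t(y)+\alpha c_{t+1}E[D_t]$. Standing assumptions: (i) each $C_t$ is convex with $C_t(y)\to+\infty$ as $|y|\to\infty$; (ii) $K_t\ge \alpha K_{t+1}$ for $t=0,\dots,T-2$. Grid construction. Fix $\theta>0$, $z_m=m\theta$, $Z_\theta=\{z_m:m\in\mathbb Z\}$, $f_t(n)=F_t(z_{n+1})-F_t(z_n)$ ($n\ge -1$). $C^m_t=\min\{y: C_t(y)=\min_x C_t(x)\}$; with $z_{n_0}<C^m_t\le z_{n_0+1}$, $S^U_t=\min\{z_m\in Z_\theta: z_m\ge C^m_t,\ C_t(z_m)>C_t(z_{n_0})+K_t\}$. $s_{T-1}$ is a point with $s_{T-1}\le C^m_{T-1}$, $C_{T-1}(s_{T-1})=C_{T-1}(C^m_{T-1})+K_{T-1}$; $\bar I_{T-1}=s_{T-1}$. For $t=T-2,\dots,0$: $I_t=\max\{z_m\in Z_\theta: z_m<\min(\bar I_{t+1}-\theta,C^m_t)\}$, $\bar I_t=\max\{z_m\in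 Z_\theta: z_m\le I_t,\ C_t(z_m)>C_t(I_t)+K_t\}+\theta$. $H_{T-1}=C_{T-1}$, $S_{T-1}=C^m_{T-1}$; $V_t(y)=H_t(S_t)+K_t$ for $y<s_t$, $V_t(y)=H_t(y)$ for $y\ge s_t$. For $t=T-2,\dots,0$: $H_t(y)=C_t(y)+\alpha\sum_{n=-1}^\infty V_{t+1}(y-z_n)f_t(n)$; $S_t=\max\{z_m\in Z_\theta: I_t\le z_m\le S^U_t,\ H_t(z_m)=\min\{H_t(z_n):z_n\in Z_\theta, I_t\le z_n\le S^U_t\}\}$; $s_t=S_t$ if $K_t=0$, else $s_t=\min\{z_m\in Z_\theta:\bar I_t\le z_m\le S_t,\ H_t(z_m)\le H_t(S_t)+K_t\}$. *)

theory Defs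
  imports "HOL-Probability.Probability"
begin

definition distF :: "real measure \<Rightarrow> real \<Rightarrow> real" where
  "distF D x = measure D {..x}"

definition meanD :: "real measure \<Rightarrow> real" where
  "meanD D = integral\<^sup>L D (\<lambda>x. x)"

definition Ccost :: "real \<Rightarrow> (nat \<Rightarrow> real) \<Rightarrow> (nat \<Rightarrow> real \<Rightarrow> real) \<Rightarrow> (nat \<Rightarrow> real measure) \<Rightarrow> nat \<Rightarrow> real \<Rightarrow> real" where
  "Ccost \<alpha> c G M t y = (c t - \<alpha> * c (Suc t)) * y + G t y + \<alpha> * c (Suc t) * meanD (M t)"

definition zg :: "real \<Rightarrow> int \<Rightarrow> real" where
  "zg \<theta> m = real_of_int m * \<theta>"

definition fprob :: "(nat \<Rightarrow> real measure) \<Rightarrow> real \<Rightarrow> nat \<Rightarrow> int \<Rightarrow> real" where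
  "fprob M \<theta> t n = distF (M t) (zg \<theta> (n + 1)) - distF (M t) (zg \<theta> n)"

definition Cmin :: "(real \<Rightarrow> real) \<Rightarrow> real" where
  "Cmin C = (LEAST y. \<forall>x. C y \<le> C x)"

text \<open>S^U, with n0 the index with z_{n0} < C^m <= z_{n0+1}\<close>
definition SUb :: "real \<Rightarrow> (real \<Rightarrow> real) \<Rightarrow> real \<Rightarrow> real" where
  "SUb \<theta> C k = (let n0 = \<lceil>Cmin C / \<theta>\<rceil> - 1 in
     zg \<theta> (LEAST m. Cmin C \<le> zg \<theta> m \<and> C (zg \<theta> n0) + k < C (zg \<theta> m)))"

definition slast :: "(real \<Rightarrow> real) \<Rightarrow> real \<Rightarrow> real" where
  "slast C k = (SOME s. s \<le> Cmin C \<and> C s = C (Cmin C) + k)"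

definition Vfun :: "real \<Rightarrow> (real \<Rightarrow> real) \<Rightarrow> real \<Rightarrow> real \<Rightarrow> real \<Rightarrow> real" where
  "Vfun k H S s y = (if y < s then H S + k else H y)"

text \<open>Backward recursion. stage ... j describes period t = T-1-j and returns
  (H_t, S_t, s_t, I_t, Ibar_t). For t = T-1 the component I is a dummy (set to s_{T-1}).
  The sum over n >= -1 is written as a series over k :: nat with n = k - 1.\<close>
fun stage :: "nat \<Rightarrow> real \<Rightarrow> (nat \<Rightarrow> real) \<Rightarrow> real \<Rightarrow> (nat \<Rightarrow> real \<Rightarrow> real) \<Rightarrow> (nat \<Rightarrow> int \<Rightarrow> real)
    \<Rightarrow> nat \<Rightarrow> (real \<Rightarrow> real) \<times> real \<times> real \<times> real \<times> real" where
  "stage T \<alpha> K \<theta> C f 0 =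
     (C (T - 1), Cmin (C (T - 1)), slast (C (T - 1)) (K (T - 1)),
      slast (C (T - 1)) (K (T - 1)), slast (C (T - 1)) (K (T - 1)))"
| "stage T \<alpha> K \<theta> C f (Suc j) =
    (case stage T \<alpha> K \<theta> C f j of (H', S', s', _, Ib') \<Rightarrow>
     (let t = T - 2 - j;
          V' = Vfun (K (Suc t)) H' S' s';
          H = (\<lambda>y. C t y + \<alpha> * (\<Sum>k. V' (y - zg \<theta> (int k - 1)) * f t (int k - 1)));
          I = zg \<theta> (GREATEST m. zg \<theta> m < min (Ib' - \<theta>) (Cmin (C t)));
          Ib = zg \<theta> (GREATEST m. zg \<theta> m \<le> I \<and> C t I + K t < C t (zg \<theta> m)) + \<theta>;
          SU = SUb \<theta> (C t) (K t);
          S = zg \<theta> (GREATEST m. I \<le> zg \<theta> m \<and> zg \<theta> m \<le> SU \<and>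
                   (\<forall>n. I \<le> zg \<theta> n \<and> zg \<theta> n \<le> SU \<longrightarrow> H (zg \<theta> m) \<le> H (zg \<theta> n)));
          s = (if K t = 0 then S
               else zg \<theta> (LEAST m. Ib \<le> zg \<theta> m \<and> zg \<theta> m \<le> S \<and> H (zg \<theta> m) \<le> H S + K t))
      in (H, S, s, I, Ib)))"

definition Hf where "Hf T \<alpha> K \<theta> C f t = fst (stage T \<alpha> K \<theta> C f (T - 1 - t))"
definition Sf where "Sf T \<alpha> K \<theta> C f t = fst (snd (stage T \<alpha> K \<theta> C f (T - 1 - t)))"
definition sf where "sf T \<alpha> K \<theta> C f t = fst (snd (snd (stage T \<alpha> K \<theta> C f (T - 1 - t))))"
definition Vf where
  "Vf T \<alpha> K \<theta> C f t = Vfun (K t) (Hf T \<alpha> K \<theta> C f t) (Sf T \<alpha> K \<theta> C f t) (sf T \<alpha> K \<theta> C f t)"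

end

theory Submission
  imports Defs
begin

lemma int_greatest:
  fixes P :: "int \<Rightarrow> bool"
  assumes "P k0" "\<And>m. P m \<Longrightarrow> m \<le> B"
  shows "P (GREATEST m. P m) \<and> (\<forall>m. P m \<longrightarrow> m \<le> (GREATEST m. P m))"
proof -
  let ?A = "{m. P m \<and> k0 \<le> m}"
  have fin: "finite ?A" by (rule finite_subset[of _ "{k0..B}"]) (auto dest: assms(2))
  have ne: "?A \<noteq> {}" using assms(1) by auto
  have "(GREATEST m. P m) = Max ?A"
  proof (rule Greatest_equality)
    show "P (Max ?A)" using Max_in[OF fin ne] by auto
    fix y assume "P y"
    show "y \<le> Max ?A"
    proof (cases "k0 \<le> y")
      case True then show ?thesis using Max_ge[OF fin] \<open>P y\<close> by auto
    next
      case False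
      have "k0 \<le> Max ?A" using Max_ge[OF fin] assms(1) by auto
      then show ?thesis using False by simp
    qed
  qed
  moreover have "P (Max ?A)" using Max_in[OF fin ne] by auto
  moreover have "\<forall>m. P m \<longrightarrow> m \<le> Max ?A"
  proof (intro allI impI)
    fix y assume "P y"
    show "y \<le> Max ?A"
    proof (cases "k0 \<le> y")
      case True then show ?thesis using Max_ge[OF fin] \<open>P y\<close> by auto
    next
      case False
      have "k0 \<le> Max ?A" using Max_ge[OF fin] assms(1) by auto
      then show ?thesis using False by simp
    qed
  qed
  ultimately show ?thesis by simp
qed

lemma int_least:
  fixes P :: "int \<Rightarrow> bool"
  assumes "P k0" "\<And>m. P m \<Longrightarrow> B \<le> m"
  shows "P (LEAST m. P m) \<and> (\<forall>m. P m \<longrightarrow> (LEAST m. P m) \<le> m)"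
proof -
  have g: "(\<lambda>m. P (- m)) (- k0)" using assms(1) by simp
  have "\<And>m. P (- m) \<Longrightarrow> m \<le> - B" using assms(2) by force
  from int_greatest[of "\<lambda>m. P (- m)", OF g this]
  have h: "P (- (GREATEST m. P (- m)))" "\<forall>m. P (- m) \<longrightarrow> m \<le> (GREATEST m. P (- m))" by auto
  have "(LEAST m. P m) = - (GREATEST m. P (- m))"
  proof (rule Least_equality)
    show "P (- (GREATEST m. P (- m)))" by (rule h(1))
    fix y assume "P y" then show "- (GREATEST m. P (- m)) \<le> y" using h(2)[rule_format, of "-y"] by simp
  qed
  then show ?thesis using h by (metis minus_minus neg_le_iff_le)
qed

lemma coerc_bot:
  fixes C :: "real \<Rightarrow> real"
  assumes "filterlim C at_top at_bot"
  shows "\<exists>x0. \<forall>x\<le>x0. B < C x"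
proof -
  have "eventually (\<lambda>x. B < C x) at_bot"
    using assms filterlim_at_top_dense by blast
  then show ?thesis unfolding eventually_at_bot_linorder by auto
qed

lemma coerc_top:
  fixes C :: "real \<Rightarrow> real"
  assumes "filterlim C at_top at_top"
  shows "\<exists>x0. \<forall>x\<ge>x0. B < C x"
proof -
  have "eventually (\<lambda>x. B < C x) at_top"
    using assms filterlim_at_top_dense by blast
  then show ?thesis unfolding eventually_at_top_linorder by auto
qed

lemma mono_left:
  fixes C :: "real \<Rightarrow> real"
  assumes cv: "convex_on UNIV C" and mn: "\<forall>x. C m \<le> C x" and "x \<le> y" "y \<le> m"
  shows "C y \<le> C x"
proof (cases "x = m")
  case True then show ?thesis using assms by auto
next
  case False
  then have xm: "x < m" using assms by auto
  define u where "u = (y - x) / (m - x)"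
  have u0: "0 \<le> u" "u \<le> 1" using assms xm by (auto simp: u_def field_simps)
  have um: "u * (m - x) = y - x" using xm by (simp add: u_def)
  have yeq: "y = (1 - u) * x + u * m" using um by (simp add: algebra_simps)
  have "C y \<le> (1 - u) * C x + u * C m"
    using convex_onD[OF cv, of u x m] u0 unfolding yeq by simp
  also have "\<dots> \<le> (1 - u) * C x + u * C x"
    using mn u0 by (simp add: mult_left_mono)
  finally show ?thesis by (simp add: algebra_simps)
qed


lemma Cmin_min:
  fixes C :: "real \<Rightarrow> real"
  assumes cv: "convex_on UNIV C" and ct: "filterlim C at_top at_top" and cb: "filterlim C at_top at_bot"
  shows "\<forall>x. C (Cmin C) \<le> C x"
proof -
  have cont: "continuous_on UNIV C" using convex_on_continuous[OF open_UNIV cv] .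
  obtain a0 where a0: "\<forall>x\<le>a0. C 0 < C x" using coerc_bot[OF cb] by blast
  obtain b0 where b0: "\<forall>x\<ge>b0. C 0 < C x" using coerc_top[OF ct] by blast
  define a where "a = min a0 0"
  define b where "b = max b0 0"
  have "\<exists>x\<in>{a..b}. \<forall>y\<in>{a..b}. C x \<le> C y"
    by (rule continuous_attains_inf) (auto simp: a_def b_def intro: continuous_on_subset[OF cont])
  then obtain xs where xs: "xs \<in> {a..b}" "\<forall>y\<in>{a..b}. C xs \<le> C y" by blast
  have c0: "C xs \<le> C 0" using xs by (auto simp: a_def b_def)
  have glob: "\<forall>y. C xs \<le> C y"
  proof
    fix y show "C xs \<le> C y"
    proof (cases "y \<in> {a..b}")
      case True then show ?thesis using xs by auto
    next
      case False
      then have "y < a \<or> y > b" by auto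
      then have "C 0 < C y" using a0 b0 by (auto simp: a_def b_def)
      then show ?thesis using c0 by simp
    qed
  qed
  define Mset where "Mset = {y. \<forall>x. C y \<le> C x}"
  have ne: "Mset \<noteq> {}" using glob by (auto simp: Mset_def)
  have bdd: "bdd_below Mset"
  proof (rule bdd_belowI[of _ a])
    fix y assume "y \<in> Mset"
    then have "C y \<le> C xs" by (auto simp: Mset_def)
    have "\<not> y \<le> a0"
    proof
      assume "y \<le> a0" then have "C 0 < C y" using a0 by auto
      then show False using \<open>C y \<le> C xs\<close> c0 by simp
    qed
    then show "a \<le> y" by (simp add: a_def)
  qed
  have cl: "closed Mset"
  proof -
    have "Mset = (\<Inter>x. {y. C y \<le> C x})" by (auto simp: Mset_def)
    moreover have "\<And>x. closed {y. C y \<le> C x}"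
      by (rule closed_Collect_le[OF cont continuous_on_const])
    ultimately show ?thesis by auto
  qed
  have inM: "Inf Mset \<in> Mset" using closed_contains_Inf[OF ne bdd cl] .
  have "Cmin C = Inf Mset"
    unfolding Cmin_def
  proof (rule Least_equality)
    show "\<forall>x. C (Inf Mset) \<le> C x" using inM by (auto simp: Mset_def)
    fix y assume "\<forall>x. C y \<le> C x"
    then show "Inf Mset \<le> y" using cInf_lower[OF _ bdd] by (auto simp: Mset_def)
  qed
  then show ?thesis using inM by (auto simp: Mset_def)
qed

lemma slast_prop:
  fixes C :: "real \<Rightarrow> real"
  assumes cv: "convex_on UNIV C" and ct: "filterlim C at_top at_top" and cb: "filterlim C at_top at_bot"
    and k: "0 \<le> k"
  shows "slast C k \<le> Cmin C \<and> C (slast C k) = C (Cmin C) + k"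
proof -
  have cont: "continuous_on UNIV C" using convex_on_continuous[OF open_UNIV cv] .
  obtain x0 where x0: "\<forall>x\<le>x0. C (Cmin C) + k < C x" using coerc_bot[OF cb] by blast
  define a where "a = min x0 (Cmin C)"
  have "\<exists>x. a \<le> x \<and> x \<le> Cmin C \<and> C x = C (Cmin C) + k"
    by (rule IVT2') (use x0 k in \<open>auto simp: a_def intro: continuous_on_subset[OF cont] less_imp_le\<close>)
  then have "\<exists>s. s \<le> Cmin C \<and> C s = C (Cmin C) + k" by blast
  from someI_ex[OF this] show ?thesis unfolding slast_def .
qed


lemma zg_le_iff: "0 < \<theta> \<Longrightarrow> zg \<theta> a \<le> zg \<theta> b \<longleftrightarrow> a \<le> b"
  by (simp add: zg_def)
lemma zg_less_iff: "0 < \<theta> \<Longrightarrow> zg \<theta> a < zg \<theta> b \<longleftrightarrow> a < b"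
  by (simp add: zg_def)
lemma zg_plus1: "zg \<theta> (m + 1) = zg \<theta> m + \<theta>"
  by (simp add: zg_def algebra_simps)
lemma zg_minus1: "zg \<theta> (m - 1) = zg \<theta> m - \<theta>"
  by (simp add: zg_def algebra_simps)
lemma zg_le_floor: "0 < \<theta> \<Longrightarrow> zg \<theta> m \<le> x \<Longrightarrow> m \<le> \<lfloor>x / \<theta>\<rfloor>"
  by (simp add: zg_def le_floor_iff pos_le_divide_eq)
lemma zg_ge_ceil: "0 < \<theta> \<Longrightarrow> x \<le> zg \<theta> m \<Longrightarrow> \<lceil>x / \<theta>\<rceil> \<le> m"
  by (simp add: zg_def ceiling_le_iff pos_divide_le_eq)
lemma zg_floor: "0 < \<theta> \<Longrightarrow> zg \<theta> \<lfloor>x / \<theta>\<rfloor> \<le> x"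
  by (simp add: zg_def) (metis floor_divide_lower)
lemma zg_ceil: "0 < \<theta> \<Longrightarrow> x \<le> zg \<theta> \<lceil>x / \<theta>\<rceil>"
  by (simp add: zg_def) (metis ceiling_divide_upper)
lemma zg_less_ceil: "0 < \<theta> \<Longrightarrow> zg \<theta> m < x \<longleftrightarrow> m \<le> \<lceil>x / \<theta>\<rceil> - 1"
proof -
  assume th: "0 < \<theta>"
  have "zg \<theta> m < x \<longleftrightarrow> real_of_int m < x / \<theta>" using th by (simp add: zg_def pos_less_divide_eq)
  also have "\<dots> \<longleftrightarrow> m < \<lceil>x / \<theta>\<rceil>" by (simp add: less_ceiling_iff)
  finally show ?thesis by simp
qed


lemma step_generic:
  fixes C H V :: "real \<Rightarrow> real" and f :: "int \<Rightarrow> real"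
  assumes cv: "convex_on UNIV C" and ct: "filterlim C at_top at_top" and cb: "filterlim C at_top at_bot"
    and k: "0 \<le> k" and th: "0 < \<theta>"
    and HD: "H = (\<lambda>y. C y + \<alpha> * (\<Sum>kk. V (y - zg \<theta> (int kk - 1)) * f (int kk - 1)))"
    and Vc: "\<forall>y. y < Ib' \<longrightarrow> V y = v0"
    and ID: "I = zg \<theta> (GREATEST m. zg \<theta> m < min (Ib' - \<theta>) (Cmin C))"
    and IbD: "Ib = zg \<theta> (GREATEST m. zg \<theta> m \<le> I \<and> C I + k < C (zg \<theta> m)) + \<theta>"
    and SUD: "SU = SUb \<theta> C k"
    and SD: "S = zg \<theta> (GREATEST m. I \<le> zg \<theta> m \<and> zg \<theta> m \<le> SU \<and>
                   (\<forall>n. I \<le> zg \<theta> n \<and> zg \<theta> n \<le> SU \<longrightarrow> H (zg \<theta> m) \<le> H (zg \<theta> n)))"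
    and sD: "s = (if k = 0 then S
               else zg \<theta> (LEAST m. Ib \<le> zg \<theta> m \<and> zg \<theta> m \<le> S \<and> H (zg \<theta> m) \<le> H S + k))"
  shows "Ib \<le> s \<and> H S + k \<le> H (s - \<theta>)"
proof -
  have mn: "\<forall>x. C (Cmin C) \<le> C x" by (rule Cmin_min[OF cv ct cb])
  define c where "c = min (Ib' - \<theta>) (Cmin C)"
  define mI where "mI = \<lceil>c / \<theta>\<rceil> - 1"
  have "(GREATEST m. zg \<theta> m < c) = mI"
    by (rule Greatest_equality) (auto simp: zg_less_ceil[OF th] mI_def)
  then have Ieq: "I = zg \<theta> mI" using ID by (simp add: c_def)
  have Ic: "I < c" using Ieq zg_less_ceil[OF th] by (simp add: mI_def)
  define c0 where "c0 = (\<Sum>kk. v0 * f (int kk - 1))"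
  have Hc: "H y = C y + \<alpha> * c0" if "y \<le> I" for y
  proof -
    have "\<And>kk::nat. V (y - zg \<theta> (int kk - 1)) = v0"
    proof -
      fix kk :: nat
      have "zg \<theta> (int kk - 1) \<ge> - \<theta>" using th by (simp add: zg_def algebra_simps)
      then have "y - zg \<theta> (int kk - 1) < Ib'" using that Ic by (simp add: c_def)
      then show "V (y - zg \<theta> (int kk - 1)) = v0" using Vc by auto
    qed
    then show ?thesis by (simp add: HD c0_def)
  qed
  obtain x0 where x0: "\<forall>x\<le>x0. C I + k < C x" using coerc_bot[OF cb] by blast
  define PI where "PI = (\<lambda>m. zg \<theta> m \<le> I \<and> C I + k < C (zg \<theta> m))"
  have PI0: "PI \<lfloor>min x0 I / \<theta>\<rfloor>"
    using zg_floor[OF th, of "min x0 I"] x0 by (auto simp: PI_def)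
  have PIb: "\<And>m. PI m \<Longrightarrow> m \<le> \<lfloor>I / \<theta>\<rfloor>" using zg_le_floor[OF th] by (auto simp: PI_def)
  define mg where "mg = (GREATEST m. PI m)"
  have mg: "PI mg" "\<forall>m. PI m \<longrightarrow> m \<le> mg" using int_greatest[of PI, OF PI0 PIb] by (auto simp: mg_def)
  have "zg \<theta> mg \<noteq> I" using mg(1) k by (auto simp: PI_def)
  then have "zg \<theta> mg < I" using mg(1) by (auto simp: PI_def)
  then have "mg < mI" using Ieq zg_less_iff[OF th] by simp
  have Ibeq: "Ib = zg \<theta> (mg + 1)" using IbD by (simp add: zg_plus1 mg_def PI_def)
  have IbI: "Ib \<le> I" using Ibeq Ieq zg_le_iff[OF th] \<open>mg < mI\<close> by simp
  have Cmg: "C I + k < C (Ib - \<theta>)" using mg(1) Ibeq by (simp add: zg_plus1 PI_def)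
  have mgI: "Ib - \<theta> \<le> I" using mg(1) Ibeq by (simp add: zg_plus1 PI_def)
  define n0 where "n0 = \<lceil>Cmin C / \<theta>\<rceil> - 1"
  define PU where "PU = (\<lambda>m. Cmin C \<le> zg \<theta> m \<and> C (zg \<theta> n0) + k < C (zg \<theta> m))"
  obtain x1 where x1: "\<forall>x\<ge>x1. C (zg \<theta> n0) + k < C x" using coerc_top[OF ct] by blast
  have PU0: "PU \<lceil>max x1 (Cmin C) / \<theta>\<rceil>"
    using zg_ceil[OF th, of "max x1 (Cmin C)"] x1 by (auto simp: PU_def)
  have PUb: "\<And>m. PU m \<Longrightarrow> \<lceil>Cmin C / \<theta>\<rceil> \<le> m" using zg_ge_ceil[OF th] by (auto simp: PU_def)
  have "PU (LEAST m. PU m)" using int_least[of PU, OF PU0 PUb] by auto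
  then have SUge: "Cmin C \<le> SU" using SUD by (simp add: SUb_def PU_def n0_def Let_def)
  have ISU: "I < SU" using Ic SUge by (simp add: c_def)
  define N where "N = {n. I \<le> zg \<theta> n \<and> zg \<theta> n \<le> SU}"
  have finN: "finite N"
    by (rule finite_subset[of _ "{mI..\<lfloor>SU / \<theta>\<rfloor>}"])
       (auto simp: N_def Ieq zg_le_iff[OF th] intro: zg_le_floor[OF th])
  have mIN: "mI \<in> N" using ISU Ieq by (auto simp: N_def)
  define hN where "hN = (\<lambda>n. H (zg \<theta> n))"
  obtain m0 where m0: "m0 \<in> N" "\<forall>n\<in>N. hN m0 \<le> hN n"
  proof -
    have ne: "hN ` N \<noteq> {}" using mIN by auto
    have "Min (hN ` N) \<in> hN ` N" using Min_in[OF finite_imageI[OF finN] ne] .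
    then obtain m0 where "m0 \<in> N" "hN m0 = Min (hN ` N)" by auto
    moreover have "\<forall>n\<in>N. Min (hN ` N) \<le> hN n" using Min_le[OF finite_imageI[OF finN]] by auto
    ultimately show ?thesis using that by auto
  qed
  define PS where "PS = (\<lambda>m. I \<le> zg \<theta> m \<and> zg \<theta> m \<le> SU \<and>
                   (\<forall>n. I \<le> zg \<theta> n \<and> zg \<theta> n \<le> SU \<longrightarrow> H (zg \<theta> m) \<le> H (zg \<theta> n)))"
  have PS0: "PS m0" using m0 by (auto simp: PS_def N_def hN_def)
  have PSb: "\<And>m. PS m \<Longrightarrow> m \<le> \<lfloor>SU / \<theta>\<rfloor>" using zg_le_floor[OF th] by (auto simp: PS_def)
  define mS where "mS = (GREATEST m. PS m)"
  have mS: "PS mS" using int_greatest[of PS, OF PS0 PSb] by (auto simp: mS_def)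
  have Seq: "S = zg \<theta> mS" using SD by (simp add: mS_def PS_def)
  have IS: "I \<le> S" and SSU: "S \<le> SU" and Smin: "\<And>n. n \<in> N \<Longrightarrow> H S \<le> H (zg \<theta> n)"
    using mS Seq by (auto simp: PS_def N_def)
  have HSI: "H S \<le> H I" using Smin[OF mIN] Ieq by simp
  show ?thesis
  proof (cases "k = 0")
    case True
    then have seq: "s = S" using sD by simp
    have "H S \<le> H (S - \<theta>)"
    proof (cases "I < S")
      case True
      then have "mI < mS" using Ieq Seq zg_less_iff[OF th] by simp
      then have "mS - 1 \<in> N" using Ieq Seq SSU zg_le_iff[OF th, of mI "mS - 1"] th
        by (auto simp: N_def zg_minus1)
      then have "H S \<le> H (zg \<theta> (mS - 1))" using Smin by blast
      then show ?thesis using Seq by (simp add: zg_minus1)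
    next
      case False
      then have SI: "S = I" using IS by simp
      have "I \<le> Cmin C" using Ic by (simp add: c_def)
      then have "C I \<le> C (I - \<theta>)" using mono_left[OF cv mn, of "I - \<theta>" I] th by simp
      then show ?thesis using SI Hc[of I] Hc[of "I - \<theta>"] th by simp
    qed
    then show ?thesis using seq IbI IS True by simp
  next
    case False
    define Ps where "Ps = (\<lambda>m. Ib \<le> zg \<theta> m \<and> zg \<theta> m \<le> S \<and> H (zg \<theta> m) \<le> H S + k)"
    have seq: "s = zg \<theta> (LEAST m. Ps m)" using sD False by (simp add: Ps_def)
    have Ps0: "Ps mS" using Seq IbI IS k by (auto simp: Ps_def)
    have Psb: "\<And>m. Ps m \<Longrightarrow> mg + 1 \<le> m" using Ibeq zg_le_iff[OF th] by (auto simp: Ps_def)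
    define ms where "ms = (LEAST m. Ps m)"
    have ms: "Ps ms" "\<forall>m. Ps m \<longrightarrow> ms \<le> m" using int_least[of Ps, OF Ps0 Psb] by (auto simp: ms_def)
    have s2: "s = zg \<theta> ms" using seq ms_def by simp
    have Ibs: "Ib \<le> s" using ms(1) s2 by (simp add: Ps_def)
    have "H S + k \<le> H (s - \<theta>)"
    proof (cases "Ib \<le> zg \<theta> (ms - 1)")
      case True
      have "\<not> Ps (ms - 1)" using ms(2) by force
      moreover have "zg \<theta> (ms - 1) \<le> S" using ms(1) th by (simp add: Ps_def zg_minus1)
      ultimately have "H S + k < H (zg \<theta> (ms - 1))" using True by (auto simp: Ps_def)
      then show ?thesis using s2 by (simp add: zg_minus1)
    next
      case False
      then have "ms - 1 < mg + 1" using Ibeq zg_le_iff[OF th] by simp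
      moreover have "mg + 1 \<le> ms" using Psb ms(1) by simp
      ultimately have "ms = mg + 1" by simp
      then have "s - \<theta> = Ib - \<theta>" using s2 Ibeq by simp
      moreover have "H (Ib - \<theta>) = C (Ib - \<theta>) + \<alpha> * c0" using Hc mgI by simp
      moreover have "H I = C I + \<alpha> * c0" using Hc by simp
      ultimately show ?thesis using Cmg HSI by simp
    qed
    then show ?thesis using Ibs by simp
  qed
qed


lemma stage_step:
  fixes Cc :: "nat \<Rightarrow> real \<Rightarrow> real"
  assumes cv: "convex_on UNIV (Cc (T - 2 - j))" and ct: "filterlim (Cc (T - 2 - j)) at_top at_top"
    and cb: "filterlim (Cc (T - 2 - j)) at_top at_bot"
    and k: "0 \<le> K (T - 2 - j)" and th: "0 < \<theta>"
    and sj: "stage T \<alpha> K \<theta> Cc f j = (H', S', s', I', Ib')" and le: "Ib' \<le> s'"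
    and e: "stage T \<alpha> K \<theta> Cc f (Suc j) = (H, S, s, I, Ib)"
  shows "Ib \<le> s \<and> H S + K (T - 2 - j) \<le> H (s - \<theta>)"
proof -
  define t where "t = T - 2 - j"
  note e2 = e[unfolded stage.simps sj, simplified Let_def prod.case, folded t_def]
  have eqs: "H = (\<lambda>y. Cc t y + \<alpha> * (\<Sum>k. Vfun (K (Suc t)) H' S' s' (y - zg \<theta> (int k - 1)) * f t (int k - 1)))"
    "I = zg \<theta> (GREATEST m. zg \<theta> m < min (Ib' - \<theta>) (Cmin (Cc t)))"
    "Ib = zg \<theta> (GREATEST m. zg \<theta> m \<le> I \<and> Cc t I + K t < Cc t (zg \<theta> m)) + \<theta>"
    "S = zg \<theta> (GREATEST m. I \<le> zg \<theta> m \<and> zg \<theta> m \<le> SUb \<theta> (Cc t) (K t) \<and>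
                   (\<forall>n. I \<le> zg \<theta> n \<and> zg \<theta> n \<le> SUb \<theta> (Cc t) (K t) \<longrightarrow> H (zg \<theta> m) \<le> H (zg \<theta> n)))"
    "s = (if K t = 0 then S
               else zg \<theta> (LEAST m. Ib \<le> zg \<theta> m \<and> zg \<theta> m \<le> S \<and> H (zg \<theta> m) \<le> H S + K t))"
    using e2 by auto
  have Vc: "\<forall>y. y < Ib' \<longrightarrow> Vfun (K (Suc t)) H' S' s' y = H' S' + K (Suc t)"
    using le by (auto simp: Vfun_def)
  show ?thesis unfolding t_def[symmetric]
    by (rule step_generic[OF cv[folded t_def] ct[folded t_def] cb[folded t_def] k[folded t_def] th
          eqs(1) Vc eqs(2) eqs(3) refl eqs(4) eqs(5)])
qed


lemma stage_inv:
  fixes Cc :: "nat \<Rightarrow> real \<Rightarrow> real"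
  assumes cv: "\<forall>t<T. convex_on UNIV (Cc t)" and ct: "\<forall>t<T. filterlim (Cc t) at_top at_top"
    and cb: "\<forall>t<T. filterlim (Cc t) at_top at_bot"
    and k: "\<forall>t<T. 0 \<le> K t" and th: "0 < \<theta>"
  shows "j < T \<Longrightarrow> snd (snd (snd (snd (stage T \<alpha> K \<theta> Cc f j)))) \<le> fst (snd (snd (stage T \<alpha> K \<theta> Cc f j)))"
proof (induction j)
  case 0
  then show ?case by simp
next
  case (Suc j)
  obtain H' S' s' I' Ib' where sj: "stage T \<alpha> K \<theta> Cc f j = (H', S', s', I', Ib')" by (cases "stage T \<alpha> K \<theta> Cc f j") auto
  obtain H S s I Ib where e: "stage T \<alpha> K \<theta> Cc f (Suc j) = (H, S, s, I, Ib)" by (cases "stage T \<alpha> K \<theta> Cc f (Suc j)") auto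
  have le: "Ib' \<le> s'" using Suc sj by simp
  have tT: "T - 2 - j < T" using Suc.prems by simp
  have "Ib \<le> s \<and> H S + K (T - 2 - j) \<le> H (s - \<theta>)"
    by (rule stage_step[OF cv[rule_format, OF tT] ct[rule_format, OF tT] cb[rule_format, OF tT]
          k[rule_format, OF tT] th sj le e])
  then show ?case using e by simp
qed

theorem corollary4p1:
  fixes T :: nat and \<alpha> \<theta> :: real and c K :: "nat \<Rightarrow> real"
    and G :: "nat \<Rightarrow> real \<Rightarrow> real" and M :: "nat \<Rightarrow> real measure"
  assumes "2 \<le> T" and "0 < \<alpha>" and "\<alpha> \<le> 1" and "0 < \<theta>"
    and "\<forall>t<T. prob_space (M t)"
    and "\<forall>t<T. sets (M t) = sets borel"
    and "\<forall>t<T. AE x in M t. 0 \<le> x"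
    and "\<forall>t<T. integrable (M t) (\<lambda>x. x)"
    and "\<forall>t<T. 0 \<le> K t"
    and "\<forall>t. t + 2 \<le> T \<longrightarrow> \<alpha> * K (Suc t) \<le> K t"
    and "\<forall>t<T. convex_on UNIV (Ccost \<alpha> c G M t)"
    and "\<forall>t<T. filterlim (Ccost \<alpha> c G M t) at_top at_top"
    and "\<forall>t<T. filterlim (Ccost \<alpha> c G M t) at_top at_bot"
    and "\<forall>t y. t + 2 \<le> T \<longrightarrow>
           summable (\<lambda>k::nat. \<bar>Vf T \<alpha> K \<theta> (Ccost \<alpha> c G M) (fprob M \<theta>) (Suc t) (y - zg \<theta> (int k - 1))\<bar>
                              * fprob M \<theta> t (int k - 1))"
  shows "\<forall>t<T. Hf T \<alpha> K \<theta> (Ccost \<alpha> c G M) (fprob M \<theta>) t (sf T \<alpha> K \<theta> (Ccost \<alpha> c G M) (fprob M \<theta>) t - \<theta>)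
              \<ge> Hf T \<alpha> K \<theta> (Ccost \<alpha> c G M) (fprob M \<theta>) t (Sf T \<alpha> K \<theta> (Ccost \<alpha> c G M) (fprob M \<theta>) t) + K t"
proof (intro allI impI)
  fix t assume tT: "t < T"
  let ?C = "Ccost \<alpha> c G M" and ?f = "fprob M \<theta>"
  note cv = assms(11) and ct = assms(12) and cb = assms(13) and kk = assms(9) and th = assms(4)
  show "Hf T \<alpha> K \<theta> ?C ?f t (sf T \<alpha> K \<theta> ?C ?f t - \<theta>) \<ge> Hf T \<alpha> K \<theta> ?C ?f t (Sf T \<alpha> K \<theta> ?C ?f t) + K t"
  proof (cases "t = T - 1")
    case True
    then have z: "T - 1 - t = 0" by simp
    have cvt: "convex_on UNIV (?C (T - 1))" "filterlim (?C (T - 1)) at_top at_top"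
      "filterlim (?C (T - 1)) at_top at_bot" "0 \<le> K (T - 1)" using cv ct cb kk tT True by auto
    have sl: "slast (?C (T - 1)) (K (T - 1)) \<le> Cmin (?C (T - 1)) \<and>
        ?C (T - 1) (slast (?C (T - 1)) (K (T - 1))) = ?C (T - 1) (Cmin (?C (T - 1))) + K (T - 1)"
      by (rule slast_prop[OF cvt])
    have mn: "\<forall>x. ?C (T - 1) (Cmin (?C (T - 1))) \<le> ?C (T - 1) x" by (rule Cmin_min[OF cvt(1-3)])
    have "?C (T - 1) (slast (?C (T - 1)) (K (T - 1))) \<le> ?C (T - 1) (slast (?C (T - 1)) (K (T - 1)) - \<theta>)"
      by (rule mono_left[OF cvt(1) mn]) (use sl th in auto)
    then show ?thesis using sl True by (simp add: Hf_def Sf_def sf_def z)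
  next
    case False
    define j where "j = T - 2 - t"
    have z: "T - 1 - t = Suc j" using False tT by (simp add: j_def)
    have tj: "t = T - 2 - j" using False tT by (simp add: j_def)
    obtain H' S' s' I' Ib' where sj: "stage T \<alpha> K \<theta> ?C ?f j = (H', S', s', I', Ib')" by (cases "stage T \<alpha> K \<theta> ?C ?f j") auto
    obtain H S s I Ib where e: "stage T \<alpha> K \<theta> ?C ?f (Suc j) = (H, S, s, I, Ib)" by (cases "stage T \<alpha> K \<theta> ?C ?f (Suc j)") auto
    have jT: "j < T" using tT by (simp add: j_def)
    have le: "Ib' \<le> s'" using stage_inv[OF cv ct cb kk th jT, of \<alpha> ?f] sj by simp
    have tT': "T - 2 - j < T" using tT tj by simp
    have "Ib \<le> s \<and> H S + K (T - 2 - j) \<le> H (s - \<theta>)"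
      by (rule stage_step[OF cv[rule_format, OF tT'] ct[rule_format, OF tT'] cb[rule_format, OF tT']
          kk[rule_format, OF tT'] th sj le e])
    then have "H S + K t \<le> H (s - \<theta>)" using tj by simp
    then show ?thesis unfolding Hf_def Sf_def sf_def z e by simp
  qed
qed

end
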